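(* Let $(A,\mathit{Con},\mid\!\sim)$ be an abstract nonmonotonic system. Then there is a normal default structure $(B,\mathit{Con}^*,\Delta)$ (with trivial entailment) such that: (1) $B\supseteq A$; (2) for every $X\subseteq B$, $X\in\mathit{Con}$ if and only if $X\subseteq A$ and $X\in\mathit{Con}^*$; (3) for all $X,Y\in\mathit{Con}$, $X\mid\!\sim Y$ if and only if $X\mid\!\sim_B Y$, where $\mid\!\sim_B$ is the skeptical nonmonotonic consequence relation of $(B,\mathit{Con}^*,\Delta)$.
   Context: An abstract nonmonotonic system is a triple $(A,\mathit{Con},\mid\!\sim)$ where $\mathit{Con}$ is a collection of finite subsets of $A$ and $\mid\!\sim\ \subseteq\mathit{Con}\times\mathit{Con}$, satisfying: (1) $X\subseteq Y\in\mathit{Con}\Rightarrow X\in\mathit{Con}$; (2) $a\in A\Rightarrow\{a\}\in\mathit{Con}$; (3) $X\mid\!\sim T\Rightarrow X\cup T\in\mathit{Con}$; (4) $Y\subseteq X\Rightarrow X\mid\!\sim Y$; (5) $X\mid\!\sim T$ and $T\cup X\mid\!\sim Y$ imply $X\mid\!\sim Y$; (6) $X\mid\!\sim Y$ and $X\mid\!\sim Z$ imply $X\mid\!\sim Y\cup Z$. A normal default structure (with trivial entailment) is a triple $(B,\mathit{Con}^*,\Delta)$ where $B$ is a set of tokens; $\mathit{Con}^*$ is a set of finite subsets of $B$ with $\emptyset\in\mathit{Con}^*$, closed under subsets, and containing $\{b\}$ for each $b\in B$; an arbitrary subset of $B$ is consistent if all its finite subsets are in $\mathit{Con}^*$; $\Delta$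 is a set of normal defaults $\frac{X:a}{a}$ with $X\in\mathit{Con}^*$ and $a\in B$. For consistent $x\subseteq B$ and $S\subseteq B$: $\phi(x,S,0)=x$, $\phi(x,S,i+1)=\phi(x,S,i)\cup\{a\mid\frac{X:a}{a}\in\Delta,\ X\subseteq\phi(x,S,i),\ \{a\}\cup S \text{ consistent}\}$, $\Phi(x,S)=\bigcup_i\phi(x,S,i)$; $y$ is an extension of $x$ if $\Phi(x,y)=y$. The skeptical relation: for $X\in\mathit{Con}^*$ and finite $Y\subseteq B$, $X\mid\!\sim_B Y$ iff every element of $Y$ belongs to every extension of $X$. *)

theory Defs
  imports Main
begin

definition ans_system :: "'a set \<Rightarrow> 'a set set \<Rightarrow> ('a set \<Rightarrow> 'a set \<Rightarrow> bool) \<Rightarrow> bool" where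
  "ans_system A Con rel \<longleftrightarrow>
     (\<forall>X\<in>Con. finite X \<and> X \<subseteq> A) \<and>
     (\<forall>X Y. rel X Y \<longrightarrow> X \<in> Con \<and> Y \<in> Con) \<and>
     (\<forall>X Y. X \<subseteq> Y \<and> Y \<in> Con \<longrightarrow> X \<in> Con) \<and>
     (\<forall>a\<in>A. {a} \<in> Con) \<and>
     (\<forall>X T. rel X T \<longrightarrow> X \<union> T \<in> Con) \<and>
     (\<forall>X Y. X \<in> Con \<and> Y \<subseteq> X \<longrightarrow> rel X Y) \<and>
     (\<forall>X T Y. rel X T \<and> rel (T \<union> X) Y \<longrightarrow> rel X Y) \<and>
     (\<forall>X Y Z. rel X Y \<and> rel X Z \<longrightarrow> rel X (Y \<union> Z))"

text \<open>Normal default structure (B, ConS, Delta); a default X:a/a is the pair (X, a).\<close>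
definition normal_default_structure :: "'b set \<Rightarrow> 'b set set \<Rightarrow> ('b set \<times> 'b) set \<Rightarrow> bool" where
  "normal_default_structure B ConS Delta \<longleftrightarrow>
     {} \<in> ConS \<and>
     (\<forall>X\<in>ConS. finite X \<and> X \<subseteq> B) \<and>
     (\<forall>X Y. X \<subseteq> Y \<and> Y \<in> ConS \<longrightarrow> X \<in> ConS) \<and>
     (\<forall>b\<in>B. {b} \<in> ConS) \<and>
     (\<forall>(X, a)\<in>Delta. X \<in> ConS \<and> a \<in> B)"

definition consistent :: "'b set \<Rightarrow> 'b set set \<Rightarrow> 'b set \<Rightarrow> bool" where
  "consistent B ConS x \<longleftrightarrow> x \<subseteq> B \<and> (\<forall>F. finite F \<and> F \<subseteq> x \<longrightarrow> F \<in> ConS)"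

fun phi :: "'b set \<Rightarrow> 'b set set \<Rightarrow> ('b set \<times> 'b) set \<Rightarrow> 'b set \<Rightarrow> 'b set \<Rightarrow> nat \<Rightarrow> 'b set" where
  "phi B ConS Delta x S 0 = x"
| "phi B ConS Delta x S (Suc i) = phi B ConS Delta x S i \<union>
     {a. \<exists>X. (X, a) \<in> Delta \<and> X \<subseteq> phi B ConS Delta x S i \<and> consistent B ConS ({a} \<union> S)}"

definition Phi :: "'b set \<Rightarrow> 'b set set \<Rightarrow> ('b set \<times> 'b) set \<Rightarrow> 'b set \<Rightarrow> 'b set \<Rightarrow> 'b set" where
  "Phi B ConS Delta x S = (\<Union>i. phi B ConS Delta x S i)"

definition extension :: "'b set \<Rightarrow> 'b set set \<Rightarrow> ('b set \<times> 'b) set \<Rightarrow> 'b set \<Rightarrow> 'b set \<Rightarrow> bool" where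
  "extension B ConS Delta x y \<longleftrightarrow> consistent B ConS x \<and> Phi B ConS Delta x y = y"

definition skeptical :: "'b set \<Rightarrow> 'b set set \<Rightarrow> ('b set \<times> 'b) set \<Rightarrow> 'b set \<Rightarrow> 'b set \<Rightarrow> bool" where
  "skeptical B ConS Delta X Y \<longleftrightarrow> X \<in> ConS \<and> finite Y \<and> Y \<subseteq> B \<and>
     (\<forall>y. extension B ConS Delta X y \<longrightarrow> Y \<subseteq> y)"

end

theory Submission
  imports Defs
begin

locale cons_loc =
  fixes A :: "'a set" and Con :: "'a set set" and rel :: "'a set \<Rightarrow> 'a set \<Rightarrow> bool"
  assumes ans: "ans_system A Con rel" and emp: "{} \<in> Con"
begin

lemmas ax0 = ans[unfolded ans_system_def]
lemma ax1: "\<forall>X\<in>Con. finite X \<and> X \<subseteq> A" by (rule ax0[THEN conjunct1])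
lemma ax2: "\<forall>X Y. rel X Y \<longrightarrow> X \<in> Con \<and> Y \<in> Con" by (rule ax0[THEN conjunct2, THEN conjunct1])
lemma ax3: "\<forall>X Y. X \<subseteq> Y \<and> Y \<in> Con \<longrightarrow> X \<in> Con" by (rule ax0[THEN conjunct2, THEN conjunct2, THEN conjunct1])
lemma ax4: "\<forall>a\<in>A. {a} \<in> Con" by (rule ax0[THEN conjunct2, THEN conjunct2, THEN conjunct2, THEN conjunct1])
lemma ax5: "\<forall>X T. rel X T \<longrightarrow> X \<union> T \<in> Con" by (rule ax0[THEN conjunct2, THEN conjunct2, THEN conjunct2, THEN conjunct2, THEN conjunct1])
lemma ax6: "\<forall>X Y. X \<in> Con \<and> Y \<subseteq> X \<longrightarrow> rel X Y" by (rule ax0[THEN conjunct2, THEN conjunct2, THEN conjunct2, THEN conjunct2, THEN conjunct2, THEN conjunct1])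
lemma ax7: "\<forall>X T Y. rel X T \<and> rel (T \<union> X) Y \<longrightarrow> rel X Y" by (rule ax0[THEN conjunct2, THEN conjunct2, THEN conjunct2, THEN conjunct2, THEN conjunct2, THEN conjunct2, THEN conjunct1])
lemma ax8: "\<forall>X Y Z. rel X Y \<and> rel X Z \<longrightarrow> rel X (Y \<union> Z)" by (rule ax0[THEN conjunct2, THEN conjunct2, THEN conjunct2, THEN conjunct2, THEN conjunct2, THEN conjunct2, THEN conjunct2])
lemmas ax = ax1 ax2 ax3 ax4 ax5 ax6 ax7 ax8

lemma fin: "X \<in> Con \<Longrightarrow> finite X" using ax(1) by blast
lemma subA: "X \<in> Con \<Longrightarrow> X \<subseteq> A" using ax(1) by blast
lemma relC: "rel X Y \<Longrightarrow> X \<in> Con \<and> Y \<in> Con" using ax(2) by blast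
lemma down: "X \<subseteq> Y \<Longrightarrow> Y \<in> Con \<Longrightarrow> X \<in> Con" using ax(3) by blast
lemma sing: "a \<in> A \<Longrightarrow> {a} \<in> Con" using ax(4) by blast
lemma un: "rel X T \<Longrightarrow> X \<union> T \<in> Con" using ax(5) by blast
lemma refl: "X \<in> Con \<Longrightarrow> Y \<subseteq> X \<Longrightarrow> rel X Y" using ax(6) by blast
lemma cut: "rel X T \<Longrightarrow> rel (T \<union> X) Y \<Longrightarrow> rel X Y" using ax(7) by blast
lemma conj: "rel X Y \<Longrightarrow> rel X Z \<Longrightarrow> rel X (Y \<union> Z)" using ax(8) by blast

definition C where "C X = {a. \<exists>Y. rel X Y \<and> a \<in> Y}"

lemma single: assumes "rel X Y" "a \<in> Y" shows "rel X {a}"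
proof -
  have "Y \<union> X \<in> Con" using un[OF assms(1)] by (simp add: Un_commute)
  then have "rel (Y \<union> X) {a}" using refl assms(2) by blast
  then show ?thesis using cut assms(1) by blast
qed

lemma C_rel: assumes "X \<in> Con" "finite Y" "Y \<subseteq> C X" shows "rel X Y"
  using assms(2,3)
proof (induction Y rule: finite_induct)
  case empty then show ?case using refl assms(1) by blast
next
  case (insert a F)
  then obtain Y where "rel X Y" "a \<in> Y" unfolding C_def by blast
  then have "rel X {a}" by (rule single)
  moreover have "rel X F" using insert by blast
  ultimately show ?case using conj[of X "{a}" F] by simp
qed

lemma rel_C: "rel X Y \<Longrightarrow> Y \<subseteq> C X" unfolding C_def by blast
lemma X_C: "X \<in> Con \<Longrightarrow> X \<subseteq> C X" using refl rel_C by blast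
lemma C_A: "C X \<subseteq> A" unfolding C_def using relC subA by blast
lemma C_cut: assumes "Z \<subseteq> X" "rel Z X" shows "C X \<subseteq> C Z"
proof
  fix a assume "a \<in> C X"
  then obtain Y where Y: "rel X Y" "a \<in> Y" unfolding C_def by blast
  have "X \<union> Z = X" using assms(1) by blast
  then have "rel Z Y" using cut[OF assms(2)] Y(1) by simp
  then show "a \<in> C Z" using Y(2) unfolding C_def by blast
qed
lemma fin_C_Con: "X \<in> Con \<Longrightarrow> finite P \<Longrightarrow> P \<subseteq> C X \<Longrightarrow> P \<in> Con"
  using C_rel relC by blast

definition mk :: "'a set \<Rightarrow> 'a + 'a set set" where "mk Z = Inr {Z}"
lemma mk_inj[simp]: "mk Z = mk W \<longleftrightarrow> Z = W" unfolding mk_def by auto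
lemma mk_Inl[simp]: "mk Z \<noteq> Inl a" "Inl a \<noteq> mk Z" unfolding mk_def by auto
lemma mk_vimage[simp]: "Inl -` {mk Z} = {}" "Inl -` insert (mk Z) S = Inl -` S" unfolding mk_def by auto

definition BB where "BB = Inl ` A \<union> mk ` Con"
definition CS where "CS = {F. finite F \<and> F \<subseteq> BB \<and> Inl -` F \<in> Con \<and>
   (\<forall>Z W. mk Z \<in> F \<longrightarrow> mk W \<in> F \<longrightarrow> Z = W) \<and> (\<forall>Z. mk Z \<in> F \<longrightarrow> Z \<union> Inl -` F \<subseteq> C Z)}"
definition DD where "DD = {(Inl ` Z, mk Z) | Z. Z \<in> Con} \<union> {({mk Z}, Inl a) | Z a. Z \<in> Con \<and> a \<in> C Z}"

lemma mk_BB: "mk Z \<in> BB \<longleftrightarrow> Z \<in> Con" unfolding BB_def by auto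

lemma CS_D1: "F \<in> CS \<Longrightarrow> mk Z \<in> F \<Longrightarrow> mk W \<in> F \<Longrightarrow> Z = W"
  unfolding CS_def by blast
lemma CS_D2: "F \<in> CS \<Longrightarrow> mk Z \<in> F \<Longrightarrow> Z \<union> Inl -` F \<subseteq> C Z"
  unfolding CS_def by blast
lemma CS_D3: "F \<in> CS \<Longrightarrow> Inl -` F \<in> Con"
  unfolding CS_def by blast
lemma CS_D4: "F \<in> CS \<Longrightarrow> F \<subseteq> BB \<and> finite F"
  unfolding CS_def by blast

lemma consD:
  assumes L: "consistent BB CS S"
  shows "S \<subseteq> BB"
    and "\<And>P. finite P \<Longrightarrow> P \<subseteq> Inl -` S \<Longrightarrow> P \<in> Con"
    and "\<And>Z W. mk Z \<in> S \<Longrightarrow> mk W \<in> S \<Longrightarrow> Z = W"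
    and "\<And>Z. mk Z \<in> S \<Longrightarrow> Z \<union> Inl -` S \<subseteq> C Z"
proof -
  from L have S: "S \<subseteq> BB" and F: "\<And>F. finite F \<Longrightarrow> F \<subseteq> S \<Longrightarrow> F \<in> CS"
    unfolding consistent_def by auto
  show "S \<subseteq> BB" by (rule S)
  show "P \<in> Con" if "finite P" "P \<subseteq> Inl -` S" for P
  proof -
    have "Inl ` P \<subseteq> S" using that(2) by blast
    then have "Inl ` P \<in> CS" using F that(1) by blast
    from CS_D3[OF this] show ?thesis by (simp add: inj_vimage_image_eq)
  qed
  show "Z = W" if "mk Z \<in> S" "mk W \<in> S" for Z W
  proof -
    have "{mk Z, mk W} \<in> CS" using F that by simp
    then show ?thesis using CS_D1 by blast
  qed
  show "Z \<union> Inl -` S \<subseteq> C Z" if "mk Z \<in> S" for Z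
  proof
    fix a assume "a \<in> Z \<union> Inl -` S"
    then consider "a \<in> Z" | "Inl a \<in> S" by auto
    then show "a \<in> C Z"
    proof cases
      case 1
      have "{mk Z} \<in> CS" using F that by simp
      then show ?thesis using CS_D2[of "{mk Z}" Z] 1 by blast
    next
      case 2
      have "{mk Z, Inl a} \<in> CS" using F that 2 by simp
      moreover have "a \<in> Inl -` {mk Z, Inl a}" by simp
      ultimately show ?thesis using CS_D2[of "{mk Z, Inl a}" Z] by blast
    qed
  qed
qed

lemma consI:
  assumes R1: "S \<subseteq> BB"
    and R2: "\<And>P. finite P \<Longrightarrow> P \<subseteq> Inl -` S \<Longrightarrow> P \<in> Con"
    and R3: "\<And>Z W. mk Z \<in> S \<Longrightarrow> mk W \<in> S \<Longrightarrow> Z = W"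
    and R4: "\<And>Z. mk Z \<in> S \<Longrightarrow> Z \<union> Inl -` S \<subseteq> C Z"
  shows "consistent BB CS S"
  unfolding consistent_def
proof (intro conjI allI impI)
  show "S \<subseteq> BB" by (rule R1)
  fix F assume F: "finite F \<and> F \<subseteq> S"
  have "finite (Inl -` F)" using F by (simp add: finite_vimageI)
  moreover have "Inl -` F \<subseteq> Inl -` S" using F by blast
  ultimately have a: "Inl -` F \<in> Con" using R2 by blast
  have b: "Z \<union> Inl -` F \<subseteq> C Z" if "mk Z \<in> F" for Z
  proof -
    have "mk Z \<in> S" using F that by blast
    then have "Z \<union> Inl -` S \<subseteq> C Z" by (rule R4)
    then show ?thesis using F by blast
  qed
  have c: "Z = W" if "mk Z \<in> F" "mk W \<in> F" for Z W
    using R3 F that by (meson subsetD)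
  have d: "F \<subseteq> BB" using R1 F by blast
  show "F \<in> CS" unfolding CS_def using F a b c d by (simp only: mem_Collect_eq) blast
qed

lemma Inl_cons: assumes "Z \<in> Con" shows "consistent BB CS (Inl ` Z)"
proof (rule consI)
  show "Inl ` Z \<subseteq> BB" using subA[OF assms] unfolding BB_def by blast
  fix P assume "finite P" "P \<subseteq> Inl -` Inl ` Z"
  then show "P \<in> Con" using down assms by (auto simp: inj_vimage_image_eq)
qed auto

lemma Inl_CS: assumes "Z \<in> Con" shows "Inl ` Z \<in> CS"
  using Inl_cons[OF assms] fin[OF assms] unfolding consistent_def by blast

lemma phi_mono: "i \<le> j \<Longrightarrow> phi BB CS DD x S i \<subseteq> phi BB CS DD x S j"
  by (induction j) (auto simp: le_Suc_eq)

lemma phi_Phi: "phi BB CS DD x S i \<subseteq> Phi BB CS DD x S"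
  unfolding Phi_def by blast

lemma phi_SucE: "a \<in> phi BB CS DD x S (Suc i) \<Longrightarrow>
   a \<in> phi BB CS DD x S i \<or> (\<exists>P. (P, a) \<in> DD \<and> P \<subseteq> phi BB CS DD x S i \<and> consistent BB CS ({a} \<union> S))"
  by simp

lemma phi_SucI: "(P, a) \<in> DD \<Longrightarrow> P \<subseteq> phi BB CS DD x S i \<Longrightarrow> consistent BB CS ({a} \<union> S) \<Longrightarrow>
   a \<in> phi BB CS DD x S (Suc i)"
  by auto

lemma DD_cases: "(P, a) \<in> DD \<Longrightarrow> (\<exists>Z. Z \<in> Con \<and> P = Inl ` Z \<and> a = mk Z) \<or>
   (\<exists>Z b. Z \<in> Con \<and> b \<in> C Z \<and> P = {mk Z} \<and> a = Inl b)"
  unfolding DD_def by blast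

lemma DD_I1: "Z \<in> Con \<Longrightarrow> (Inl ` Z, mk Z) \<in> DD" unfolding DD_def by blast
lemma DD_I2: "Z \<in> Con \<Longrightarrow> b \<in> C Z \<Longrightarrow> ({mk Z}, Inl b) \<in> DD" unfolding DD_def by blast

lemma cons_down: "consistent BB CS S \<Longrightarrow> T \<subseteq> S \<Longrightarrow> consistent BB CS T"
  unfolding consistent_def by blast

lemma y_cons: assumes X: "X \<in> Con" shows "consistent BB CS (Inl ` C X \<union> {mk X})"
proof (rule consI)
  show "Inl ` C X \<union> {mk X} \<subseteq> BB" using C_A X unfolding BB_def by blast
  have v: "Inl -` (Inl ` C X \<union> {mk X}) = C X" by (auto simp: mk_def)
  show "P \<in> Con" if "finite P" "P \<subseteq> Inl -` (Inl ` C X \<union> {mk X})" for P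
    using fin_C_Con[OF X that(1)] that(2) v by simp
  show "Z = W" if "mk Z \<in> Inl ` C X \<union> {mk X}" "mk W \<in> Inl ` C X \<union> {mk X}" for Z W
    using that by auto
  show "Z \<union> Inl -` (Inl ` C X \<union> {mk X}) \<subseteq> C Z" if "mk Z \<in> Inl ` C X \<union> {mk X}" for Z
    using that v X_C[OF X] by auto
qed

lemma ext_exists: assumes X: "X \<in> Con" shows "extension BB CS DD (Inl ` X) (Inl ` C X \<union> {mk X})"
proof -
  define y where "y = Inl ` C X \<union> {mk X}"
  have cy: "consistent BB CS y" unfolding y_def by (rule y_cons[OF X])
  have ins: "a \<in> y \<Longrightarrow> consistent BB CS ({a} \<union> y)" for a using cy by (simp add: insert_absorb)
  have sub: "phi BB CS DD (Inl ` X) y i \<subseteq> y" for i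
  proof (induction i)
    case 0 then show ?case using X_C[OF X] unfolding y_def by auto
  next
    case (Suc i)
    show ?case
    proof
      fix a assume "a \<in> phi BB CS DD (Inl ` X) y (Suc i)"
      then consider "a \<in> phi BB CS DD (Inl ` X) y i"
        | P where "(P, a) \<in> DD" "P \<subseteq> phi BB CS DD (Inl ` X) y i" "consistent BB CS ({a} \<union> y)"
        using phi_SucE by blast
      then show "a \<in> y"
      proof cases
        case 1 then show ?thesis using Suc by blast
      next
        case 2
        from DD_cases[OF 2(1)] show ?thesis
        proof (elim disjE exE conjE)
          fix Z assume "a = mk Z"
          then have "mk Z \<in> {a} \<union> y" "mk X \<in> {a} \<union> y" unfolding y_def by auto
          then have "Z = X" using consD(3)[OF 2(3)] by blast
          then show ?thesis using \<open>a = mk Z\<close> unfolding y_def by simp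
        next
          fix Z b assume "b \<in> C Z" "P = {mk Z}" "a = Inl b"
          then have "mk Z \<in> y" using 2(2) Suc by blast
          then have "Z = X" unfolding y_def by auto
          then show ?thesis using \<open>b \<in> C Z\<close> \<open>a = Inl b\<close> unfolding y_def by simp
        qed
      qed
    qed
  qed
  have m1: "mk X \<in> phi BB CS DD (Inl ` X) y (Suc 0)"
  proof -
    have c1: "consistent BB CS ({mk X} \<union> y)" by (rule ins) (simp add: y_def)
    show ?thesis by (rule phi_SucI[OF DD_I1[OF X] _ c1]) simp
  qed
  have m2: "Inl a \<in> phi BB CS DD (Inl ` X) y (Suc (Suc 0))" if "a \<in> C X" for a
  proof -
    have c2: "consistent BB CS ({Inl a} \<union> y)" by (rule ins) (simp add: y_def that)
    show ?thesis by (rule phi_SucI[OF DD_I2[OF X that] _ c2]) (use m1 in simp)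
  qed
  have "y \<subseteq> Phi BB CS DD (Inl ` X) y"
  proof
    fix a assume "a \<in> y"
    then consider "a = mk X" | b where "b \<in> C X" "a = Inl b" unfolding y_def by blast
    then show "a \<in> Phi BB CS DD (Inl ` X) y"
      using m1 m2 phi_Phi by cases blast+
  qed
  moreover have "Phi BB CS DD (Inl ` X) y \<subseteq> y" using sub unfolding Phi_def by blast
  ultimately have "Phi BB CS DD (Inl ` X) y = y" by blast
  then have "extension BB CS DD (Inl ` X) y" unfolding extension_def using Inl_cons[OF X] by blast
  then show ?thesis unfolding y_def .
qed

lemma vim_Inl: "Inl -` ({Inl a} \<union> S) = insert a (Inl -` S)" by auto
lemma vim_mk: "Inl -` ({mk Z} \<union> S) = Inl -` S" by (auto simp: mk_def)

lemma ext_contains: assumes X: "X \<in> Con" and E: "extension BB CS DD (Inl ` X) y"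
  shows "Inl ` C X \<subseteq> y"
proof -
  let ?p = "phi BB CS DD (Inl ` X) y"
  have Py: "Phi BB CS DD (Inl ` X) y = y" using E unfolding extension_def by blast
  have py: "?p i \<subseteq> y" for i using phi_Phi Py by blast
  have yU: "y = (\<Union>i. ?p i)" using Py unfolding Phi_def by simp
  have cy: "consistent BB CS y"
  proof (rule ccontr)
    assume nc: "\<not> consistent BB CS y"
    have "?p i \<subseteq> Inl ` X" for i
    proof (induction i)
      case 0 then show ?case by simp
    next
      case (Suc i)
      show ?case
      proof
        fix a assume "a \<in> ?p (Suc i)"
        then have "a \<in> ?p i \<or> consistent BB CS ({a} \<union> y)" using phi_SucE by blast
        moreover have "\<not> consistent BB CS ({a} \<union> y)"
          using nc cons_down[of "{a} \<union> y" y] by blast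
        ultimately show "a \<in> Inl ` X" using Suc.IH by blast
      qed
    qed
    then have "y \<subseteq> Inl ` X" using yU by blast
    moreover have "Inl ` X \<subseteq> y" using py[of 0] by simp
    ultimately have "y = Inl ` X" by blast
    then show False using nc Inl_cons[OF X] by simp
  qed
  have inv: "?p i \<subseteq> Inl ` X \<or> (\<exists>Z. Z \<in> Con \<and> Z \<subseteq> X \<and> mk Z \<in> ?p i)" for i
  proof (induction i)
    case 0 then show ?case by simp
  next
    case (Suc i)
    show ?case
    proof (cases "\<exists>Z. Z \<in> Con \<and> Z \<subseteq> X \<and> mk Z \<in> ?p (Suc i)")
      case True then show ?thesis by blast
    next
      case False
      then have pi: "?p i \<subseteq> Inl ` X" using Suc phi_mono[of i "Suc i"] by auto
      have "?p (Suc i) \<subseteq> Inl ` X"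
      proof
        fix a assume a: "a \<in> ?p (Suc i)"
        then consider "a \<in> ?p i" | P where "(P, a) \<in> DD" "P \<subseteq> ?p i"
          using phi_SucE by blast
        then show "a \<in> Inl ` X"
        proof cases
          case 1 then show ?thesis using pi by blast
        next
          case 2
          from DD_cases[OF 2(1)] show ?thesis
          proof (elim disjE exE conjE)
            fix Z assume Z: "Z \<in> Con" "P = Inl ` Z" "a = mk Z"
            then have "Inl ` Z \<subseteq> Inl ` X" using 2(2) pi by blast
            then have "Z \<subseteq> X" by (simp add: inj_image_subset_iff)
            then show ?thesis using False Z a by blast
          next
            fix Z b assume "P = {mk Z}"
            then have "mk Z \<in> Inl ` X" using 2(2) pi by blast
            then show ?thesis by auto
          qed
        qed
      qed
      then show ?thesis by blast
    qed
  qed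
  obtain Z i where Z: "Z \<in> Con" "Z \<subseteq> X" "mk Z \<in> ?p i"
  proof (cases "\<forall>i. ?p i \<subseteq> Inl ` X")
    case False
    then obtain i where "\<not> ?p i \<subseteq> Inl ` X" by blast
    then obtain Z where "Z \<in> Con" "Z \<subseteq> X" "mk Z \<in> ?p i" using inv[of i] by blast
    then show ?thesis using that by blast
  next
    case True
    then have yX: "y \<subseteq> Inl ` X" using yU by blast
    have "consistent BB CS ({mk X} \<union> y)"
    proof (rule consI)
      show "{mk X} \<union> y \<subseteq> BB" using consD(1)[OF cy] mk_BB X by blast
      have v: "Inl -` ({mk X} \<union> y) \<subseteq> X" unfolding vim_mk using yX by blast
      show "P \<in> Con" if "finite P" "P \<subseteq> Inl -` ({mk X} \<union> y)" for P
        using down X that v by blast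
      have mm: "mk W \<in> {mk X} \<union> y \<Longrightarrow> W = X" for W using yX by auto
      show "Z = W" if "mk Z \<in> {mk X} \<union> y" "mk W \<in> {mk X} \<union> y" for Z W
        using mm that by metis
      show "W \<union> Inl -` ({mk X} \<union> y) \<subseteq> C W" if "mk W \<in> {mk X} \<union> y" for W
        using mm[OF that] v X_C[OF X] by blast
    qed
    then have "mk X \<in> ?p (Suc 0)"
      by (intro phi_SucI[OF DD_I1[OF X]]) auto
    then have "mk X \<in> Inl ` X" using yX py by blast
    then show ?thesis by auto
  qed
  have Xy: "X \<subseteq> Inl -` y" using py[of 0] by auto
  have mZy: "mk Z \<in> y" using Z(3) py by blast
  have ZC: "Z \<union> Inl -` y \<subseteq> C Z" using consD(4)[OF cy mZy] .
  have "rel Z X" using C_rel[OF Z(1) fin[OF X]] Xy ZC by blast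
  then have CXZ: "C X \<subseteq> C Z" using C_cut Z(2) by blast
  show ?thesis
  proof
    fix e :: "'a + 'a set set" assume "e \<in> Inl ` C X"
    then obtain a where a: "a \<in> C X" "e = Inl a" by blast
    then have aZ: "a \<in> C Z" using CXZ by blast
    have "consistent BB CS ({Inl a} \<union> y)"
    proof (rule consI)
      show "{Inl a} \<union> y \<subseteq> BB" using consD(1)[OF cy] C_A aZ unfolding BB_def by blast
      have v: "Inl -` ({Inl a} \<union> y) \<subseteq> C Z" unfolding vim_Inl using ZC aZ by blast
      show "P \<in> Con" if "finite P" "P \<subseteq> Inl -` ({Inl a} \<union> y)" for P
        by (rule fin_C_Con[OF Z(1) that(1)]) (use that(2) v in blast)
      have mm: "mk W \<in> {Inl a} \<union> y \<Longrightarrow> W = Z" for W using consD(3)[OF cy _ mZy] by auto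
      show "W1 = W2" if "mk W1 \<in> {Inl a} \<union> y" "mk W2 \<in> {Inl a} \<union> y" for W1 W2
        using mm that by metis
      show "W \<union> Inl -` ({Inl a} \<union> y) \<subseteq> C W" if "mk W \<in> {Inl a} \<union> y" for W
        using mm[OF that] v ZC by blast
    qed
    then have "Inl a \<in> ?p (Suc i)"
      by (intro phi_SucI[OF DD_I2[OF Z(1) aZ]]) (use Z(3) in auto)
    then show "e \<in> y" using a py by blast
  qed
qed

lemma cons_fin_CS: "consistent BB CS S \<Longrightarrow> finite S \<Longrightarrow> S \<in> CS"
  unfolding consistent_def by blast

lemma CS_down: assumes "X \<subseteq> Y" "Y \<in> CS" shows "X \<in> CS"
proof -
  have f: "finite X" using CS_D4[OF assms(2)] assms(1) finite_subset by blast
  have b: "X \<subseteq> BB" using CS_D4[OF assms(2)] assms(1) by blast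
  have c: "Inl -` X \<in> Con" by (rule down[OF vimage_mono[OF assms(1)] CS_D3[OF assms(2)]])
  have d: "Z = W" if "mk Z \<in> X" "mk W \<in> X" for Z W using CS_D1[OF assms(2)] assms(1) that by blast
  have e: "Z \<union> Inl -` X \<subseteq> C Z" if "mk Z \<in> X" for Z using CS_D2[OF assms(2)] assms(1) that by blast
  show ?thesis unfolding CS_def using f b c d e by (simp only: mem_Collect_eq) blast
qed

lemma mk_CS: assumes "Z \<in> Con" shows "{mk Z} \<in> CS"
proof -
  have "{mk Z} \<subseteq> Inl ` C Z \<union> {mk Z}" by blast
  from cons_down[OF y_cons[OF assms] this] show ?thesis using cons_fin_CS by blast
qed

lemma nds: "normal_default_structure BB CS DD"
  unfolding normal_default_structure_def
proof (intro conjI ballI allI impI)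
  show "{} \<in> CS" using Inl_CS[OF emp] by simp
  fix X assume "X \<in> CS" then show "finite X" "X \<subseteq> BB" using CS_D4 by blast+
next
  fix X Y assume "X \<subseteq> Y \<and> Y \<in> CS" then show "X \<in> CS" using CS_down by blast
next
  fix b assume "b \<in> BB"
  then consider a where "a \<in> A" "b = Inl a" | Z where "Z \<in> Con" "b = mk Z" unfolding BB_def by blast
  then show "{b} \<in> CS"
  proof cases
    case 1 then show ?thesis using Inl_CS[OF sing[OF 1(1)]] by simp
  next
    case 2 then show ?thesis using mk_CS by simp
  qed
next
  fix p assume "p \<in> DD"
  then obtain P a where pa: "p = (P, a)" "(P, a) \<in> DD" by (cases p) auto
  from DD_cases[OF pa(2)] have "P \<in> CS \<and> a \<in> BB"
  proof (elim disjE exE conjE)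
    fix Z assume "Z \<in> Con" "P = Inl ` Z" "a = mk Z"
    then show ?thesis using Inl_CS mk_BB by blast
  next
    fix Z b assume Z: "Z \<in> Con" "b \<in> C Z" "P = {mk Z}" "a = Inl b"
    then have "b \<in> A" using C_A by blast
    then show ?thesis using Z mk_CS unfolding BB_def by blast
  qed
  then show "case p of (X, a) \<Rightarrow> X \<in> CS \<and> a \<in> BB" using pa by simp
qed

lemma main_loc: "\<exists>(B :: ('a + 'a set set) set) ConS Delta.
           normal_default_structure B ConS Delta \<and>
           Inl ` A \<subseteq> B \<and>
           (\<forall>X. X \<subseteq> B \<longrightarrow> (X \<in> (\<lambda>Z. Inl ` Z) ` Con \<longleftrightarrow> X \<subseteq> Inl ` A \<and> X \<in> ConS)) \<and>
           (\<forall>X\<in>Con. \<forall>Y\<in>Con. rel X Y \<longleftrightarrow> skeptical B ConS Delta (Inl ` X) (Inl ` Y))"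
proof (intro exI conjI)
  show "normal_default_structure BB CS DD" by (rule nds)
  show "Inl ` A \<subseteq> BB" unfolding BB_def by blast
  show "\<forall>X. X \<subseteq> BB \<longrightarrow> (X \<in> (\<lambda>Z. Inl ` Z) ` Con \<longleftrightarrow> X \<subseteq> Inl ` A \<and> X \<in> CS)"
  proof (intro allI impI iffI)
    fix X :: "('a + 'a set set) set" assume "X \<in> (\<lambda>Z. Inl ` Z) ` Con"
    then obtain Z where "Z \<in> Con" "X = Inl ` Z" by blast
    then show "X \<subseteq> Inl ` A \<and> X \<in> CS" using subA Inl_CS by blast
  next
    fix X :: "('a + 'a set set) set" assume H: "X \<subseteq> Inl ` A \<and> X \<in> CS"
    then have "X = Inl ` (Inl -` X)" by blast
    moreover have "Inl -` X \<in> Con" using CS_D3 H by blast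
    ultimately show "X \<in> (\<lambda>Z. Inl ` Z) ` Con" by blast
  qed
  show "\<forall>X\<in>Con. \<forall>Y\<in>Con. rel X Y \<longleftrightarrow> skeptical BB CS DD (Inl ` X) (Inl ` Y)"
  proof (intro ballI iffI)
    fix X Y assume X: "X \<in> Con" and Y: "Y \<in> Con" and r: "rel X Y"
    have "Inl ` Y \<subseteq> y" if "extension BB CS DD (Inl ` X) y" for y
      using ext_contains[OF X that] rel_C[OF r] by blast
    moreover have "Inl ` Y \<subseteq> BB" using subA[OF Y] unfolding BB_def by blast
    ultimately show "skeptical BB CS DD (Inl ` X) (Inl ` Y)"
      unfolding skeptical_def using Inl_CS[OF X] fin[OF Y] by blast
  next
    fix X Y assume X: "X \<in> Con" and Y: "Y \<in> Con" and s: "skeptical BB CS DD (Inl ` X) (Inl ` Y)"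
    then have "Inl ` Y \<subseteq> Inl ` C X \<union> {mk X}" using ext_exists[OF X] unfolding skeptical_def by blast
    then have "Y \<subseteq> C X" by auto
    then show "rel X Y" using C_rel[OF X fin[OF Y]] by blast
  qed
qed

end

theorem theorem5:
  fixes A :: "'a set" and Con :: "'a set set" and rel :: "'a set \<Rightarrow> 'a set \<Rightarrow> bool"
  assumes "ans_system A Con rel"
    and "{} \<in> Con"
  shows "\<exists>(B :: ('a + 'a set set) set) ConS Delta.
           normal_default_structure B ConS Delta \<and>
           Inl ` A \<subseteq> B \<and>
           (\<forall>X. X \<subseteq> B \<longrightarrow> (X \<in> (\<lambda>Z. Inl ` Z) ` Con \<longleftrightarrow> X \<subseteq> Inl ` A \<and> X \<in> ConS)) \<and>
           (\<forall>X\<in>Con. \<forall>Y\<in>Con. rel X Y \<longleftrightarrow> skeptical B ConS Delta (Inl ` X) (Inl ` Y))"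
  using cons_loc.main_loc[of A Con rel] assms unfolding cons_loc_def by blast

end
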